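(* $\mathfrak{r}_{\mathrm{simult}} \le \max\{\mathfrak{r}_\sigma,\mathfrak{d}\}$.
   Context: For $x\subseteq\omega$ and $y\in[\omega]^\omega$, $y$ reaps $x$ if $y\subseteq^* x$ or $y\subseteq^*\omega\setminus x$ (where $A\subseteq^* B$ means $A\setminus B$ is finite). $\mathfrak{r}_\sigma$ is the least size of $\mathcal{A}\subseteq[\omega]^\omega$ such that for every sequence $\langle x_n:n\in\omega\rangle$ of subsets of $\omega$ there is $y\in\mathcal{A}$ reaping every $x_n$. $\mathfrak{d}$ is the dominating number. $\mathfrak{r}_{\mathrm{simult}}$ is the least size of a family $\mathcal{F}\subseteq([\omega]^\omega)^\omega$ such that for every sequence $\langle A_n\in[\omega]^\omega:n\in\omega\rangle$ there is $\langle B_n:n\in\omega\rangle\in\mathcal{F}$ such that either $B_0\subseteq\omega\setminus A_n$ for some $n$, or $B_n\subseteq A_n$ for all $n$. *)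

theory Defs
  imports Main
begin

definition almost_subset :: "nat set \<Rightarrow> nat set \<Rightarrow> bool" where
  "almost_subset A B \<longleftrightarrow> finite (A - B)"

text \<open>y reaps x (y is assumed infinite where used).\<close>
definition reaps :: "nat set \<Rightarrow> nat set \<Rightarrow> bool" where
  "reaps y x \<longleftrightarrow> almost_subset y x \<or> almost_subset y (UNIV - x)"

definition sigma_reaping_family :: "nat set set \<Rightarrow> bool" where
  "sigma_reaping_family \<A> \<longleftrightarrow>
     (\<forall>y\<in>\<A>. infinite y) \<and>
     (\<forall>x :: nat \<Rightarrow> nat set. \<exists>y\<in>\<A>. \<forall>n. reaps y (x n))"

definition dominating_family :: "(nat \<Rightarrow> nat) set \<Rightarrow> bool" where
  "dominating_family \<D> \<longleftrightarrow>
     (\<forall>f :: nat \<Rightarrow> nat. \<exists>g\<in>\<D>. \<forall>\<^sub>F n in sequentially. f n \<le> g n)"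

definition simult_family :: "(nat \<Rightarrow> nat set) set \<Rightarrow> bool" where
  "simult_family \<F> \<longleftrightarrow>
     (\<forall>B\<in>\<F>. \<forall>n. infinite (B n)) \<and>
     (\<forall>A :: nat \<Rightarrow> nat set. (\<forall>n. infinite (A n)) \<longrightarrow>
        (\<exists>B\<in>\<F>. (\<exists>n. B 0 \<subseteq> UNIV - A n) \<or> (\<forall>n. B n \<subseteq> A n)))"

end

theory Submission
  imports Defs
begin

unbundle cardinal_syntax
lemma fin_bound: "finite (S::nat set) \<Longrightarrow> \<exists>k. S \<subseteq> {..<k}"
  using finite_nat_set_iff_bounded by auto


lemma dom_infinite:
  assumes "dominating_family \<D>" shows "infinite \<D>"
proof
  assume fin: "finite \<D>"
  define f where "f n = Suc (\<Sum>g\<in>\<D>. g n)" for n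
  obtain g where g: "g \<in> \<D>" "\<forall>\<^sub>F n in sequentially. f n \<le> g n"
    using assms unfolding dominating_family_def by blast
  then obtain N where "\<forall>n\<ge>N. f n \<le> g n" by (auto simp: eventually_sequentially)
  hence "f N \<le> g N" by simp
  moreover have "g N \<le> (\<Sum>g\<in>\<D>. g N)"
    using fin g(1) by (intro member_le_sum) auto
  ultimately show False unfolding f_def by simp
qed

lemma card_bound:
  fixes M :: "'a set"
  assumes "infinite M" "|X| \<le>o |M|" "|Y| \<le>o |M|"
  shows "|X \<times> (Y \<times> (UNIV::nat set))| \<le>o |M|"
proof -
  have n: "|UNIV::nat set| \<le>o |M|" using assms(1) infinite_iff_card_of_nat by blast
  have "|Y \<times> (UNIV::nat set)| \<le>o |M|"
    using card_of_Times_ordLeq_infinite_Field[of "|M|" Y "UNIV::nat set"] assms n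
    by (simp add: Field_card_of card_of_Card_order card_of_card_order_on)
  thus ?thesis
    using card_of_Times_ordLeq_infinite_Field[of "|M|" X] assms
    by (simp add: Field_card_of card_of_Card_order card_of_card_order_on)
qed

theorem mainTheorem6:
  fixes \<A> :: "nat set set" and \<D> :: "(nat \<Rightarrow> nat) set"
  assumes "sigma_reaping_family \<A>" and "dominating_family \<D>"
  shows "\<exists>\<F>. simult_family \<F> \<and>
           ((card_of \<F>, card_of \<A>) \<in> ordLeq \<or> (card_of \<F>, card_of \<D>) \<in> ordLeq)"
proof -
  define \<Phi> where "\<Phi> = (\<lambda>(y::nat set, h::nat\<Rightarrow>nat, c::nat). (\<lambda>n. y - {..<h n + c}))"
  define \<F> where "\<F> = \<Phi> ` (\<A> \<times> (\<D> \<times> UNIV))"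
  have Ainf: "\<forall>y\<in>\<A>. infinite y" and Areap: "\<forall>x :: nat \<Rightarrow> nat set. \<exists>y\<in>\<A>. \<forall>n. reaps y (x n)"
    using assms(1) unfolding sigma_reaping_family_def by auto
  have Dinf: "infinite \<D>" using dom_infinite assms(2) .
  then obtain h0 where h0: "h0 \<in> \<D>" by (metis ex_in_conv finite.emptyI)
  have sim: "simult_family \<F>"
    unfolding simult_family_def
  proof (intro conjI ballI allI impI)
    fix B n assume "B \<in> \<F>"
    then obtain y h c where "y \<in> \<A>" "B = (\<lambda>n. y - {..<h n + c})"
      unfolding \<F>_def \<Phi>_def by auto
    thus "infinite (B n)" using Ainf by auto
  next
    fix A :: "nat \<Rightarrow> nat set" assume "\<forall>n. infinite (A n)"
    obtain y where y: "y \<in> \<A>" "\<forall>n. reaps y (A n)" using Areap by blast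
    show "\<exists>B\<in>\<F>. (\<exists>n. B 0 \<subseteq> UNIV - A n) \<or> (\<forall>n. B n \<subseteq> A n)"
    proof (cases "\<exists>n. almost_subset y (UNIV - A n)")
      case True
      then obtain n where "finite (y - (UNIV - A n))" unfolding almost_subset_def by blast
      then obtain k where k: "y - (UNIV - A n) \<subseteq> {..<k}" using fin_bound by blast
      let ?B = "\<lambda>n. y - {..<h0 n + k}"
      have BF: "?B \<in> \<F>" unfolding \<F>_def \<Phi>_def using y(1) h0
        by (intro image_eqI[where x="(y,h0,k)"]) auto
      have B0: "?B 0 \<subseteq> UNIV - A n"
      proof
        fix x assume x: "x \<in> ?B 0"
        show "x \<in> UNIV - A n"
        proof
          show "x \<in> UNIV" by simp
          show "x \<notin> A n"
          proof
            assume "x \<in> A n"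
            hence "x \<in> y - (UNIV - A n)" using x by simp
            hence "x < k" using k by blast
            thus False using x by simp
          qed
        qed
      qed
      have "(\<exists>n. ?B 0 \<subseteq> UNIV - A n) \<or> (\<forall>n. ?B n \<subseteq> A n)"
        using B0 by (intro disjI1 exI)
      thus ?thesis using BF by (rule bexI[where x="?B"])
    next
      case False
      hence "\<forall>n. finite (y - A n)" using y(2) unfolding reaps_def almost_subset_def by auto
      hence "\<forall>n. \<exists>k. y - A n \<subseteq> {..<k}" using fin_bound by blast
      then obtain g where g: "\<And>n. y - A n \<subseteq> {..<g n}" by metis
      obtain h where h: "h \<in> \<D>" "\<forall>\<^sub>F n in sequentially. g n \<le> h n"
        using assms(2) unfolding dominating_family_def by blast
      then obtain N where N: "\<forall>n\<ge>N. g n \<le> h n" by (auto simp: eventually_sequentially)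
      define c where "c = (\<Sum>i<N. g i)"
      have gle: "g n \<le> h n + c" for n
      proof (cases "n < N")
        case True
        hence "g n \<le> c" unfolding c_def by (intro member_le_sum) auto
        thus ?thesis by simp
      next
        case False hence "g n \<le> h n" using N by simp
        thus ?thesis by simp
      qed
      let ?B = "\<lambda>n. y - {..<h n + c}"
      have BF: "?B \<in> \<F>" unfolding \<F>_def \<Phi>_def using y(1) h
        by (intro image_eqI[where x="(y,h,c)"]) auto
      have BA: "\<forall>n. ?B n \<subseteq> A n"
      proof (intro allI subsetI)
        fix n x assume "x \<in> ?B n"
        hence "x \<in> y" "\<not> x < h n + c" by auto
        hence "\<not> x < g n" using gle[of n] by simp
        thus "x \<in> A n" using g[of n] \<open>x \<in> y\<close> by blast
      qed
      have "(\<exists>n. ?B 0 \<subseteq> UNIV - A n) \<or> (\<forall>n. ?B n \<subseteq> A n)"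
        using BA by (intro disjI2)
      thus ?thesis using BF by (rule bexI[where x="?B"])
    qed
  qed
  have Fle: "|\<F>| \<le>o |\<A> \<times> (\<D> \<times> (UNIV::nat set))|"
    unfolding \<F>_def by (rule card_of_image)
  have "|\<A>| \<le>o |\<D>| \<or> |\<D>| \<le>o |\<A>|"
    by (rule ordLeq_total[OF card_of_Well_order card_of_Well_order])
  thus ?thesis
  proof
    assume "|\<A>| \<le>o |\<D>|"
    hence "|\<A> \<times> (\<D> \<times> (UNIV::nat set))| \<le>o |\<D>|"
      using card_bound[OF Dinf _ ordLeq_refl[OF card_of_Card_order]] by blast
    hence "|\<F>| \<le>o |\<D>|" using Fle by (rule ordLeq_transitive[rotated])
    thus ?thesis using sim by blast
  next
    assume a: "|\<D>| \<le>o |\<A>|"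
    hence "infinite \<A>" using card_of_ordLeq_infinite[OF a Dinf] by blast
    hence "|\<A> \<times> (\<D> \<times> (UNIV::nat set))| \<le>o |\<A>|"
      using card_bound[OF _ ordLeq_refl[OF card_of_Card_order] a] by blast
    hence "|\<F>| \<le>o |\<A>|" using Fle by (rule ordLeq_transitive[rotated])
    thus ?thesis using sim by blast
  qed
qed

end
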